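(* Let $\sigma$ be a substitution on the alphabet $\mathcal A=\{1,\dots,m\}$ whose structure matrix $M$ has a real eigenvalue $\beta>1$ with a right eigenvector $\vec h=(h_1,\dots,h_m)$ having strictly positive entries. Suppose there is $r>0$ such that $\vec h\in (r\mathbb{Q}(\beta))^m$. Then the map $F:E\to E$ associated to the tiling substitution $S$ (defined below) is an algebraic generalized $\beta$-transformation.
   Context: A substitution is a map $\sigma:\mathcal A\to\mathcal A^*$, where $\mathcal A^*$ is the set of nonempty finite words over $\mathcal A$. The structure matrix $M$ is the $m\times m$ matrix with $M_{i,j}$ equal to the number of occurrences of $j$ in $\sigma(i)$; $M\vec h=\beta\vec h$. Prototiles are the labeled intervals $P_j=[0,h_j)$ (label $j$); a tile is a translate $P_j+s=[s,s+h_j)$ carrying label $j$. For a word $\mathbf w=j_1\cdots j_n$ and $s\in\mathbb R$, the patch $\pi(s,\mathbf w)$ is $(P_{j_1}+s_1,\dots,P_{j_n}+s_n)$ with $s_1=s$, $s_{i+1}=s_i+h_{j_i}$. The tiling substitution is $S(P_j+s)=\pi(\beta s,\sigma(j))$. A central tile is a tile $[s,t)$ with $s\le 0<t$; for a central tile $T$, $\bar S(T)$ denotes the unique tile of $S(T)$ containing $0$ (it is again central). Let $g_0=0$, $g_j=g_{j-1}+h_j$, $E_j=P_j+g_{j-1}=[g_{j-1},g_j)$ (label $j$), $B=g_m$, $E=[0,B)$. Define $F:E\to E$ by: for $x\in E_j$, $E_j-x$ is a central tile, and $\bar S(E_j-x)=E_k-y$ for a unique $k\in\mathcal A$ and $y\in\mathbb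 R$ (with $y\in E_k$); set $F(x)=y$. A generalized $\beta$-transformation on $E=[0,B)$ is a map $F:E\to E$ for which there exist $0=x_0<x_1<\dots<x_l=B$ and reals $y_1,\dots,y_l$ such that, with $I_j=[x_{j-1},x_j)$, $\beta I_j-y_j\subseteq E$ and $F(x)=\beta x-y_j$ for $x\in I_j$ (equivalently: piecewise linear, right-continuous, with derivative $\beta$ almost everywhere). It is algebraic if $\beta$ is an algebraic number and there is $r\in\mathbb R$ with $x_0,\dots,x_l,y_1,\dots,y_l\in r\mathbb{Q}(\beta)$. *)

theory Defs
  imports Complex_Main "HOL-Computational_Algebra.Polynomial"
begin

definition is_substitution :: "nat \<Rightarrow> (nat \<Rightarrow> nat list) \<Rightarrow> bool" where
  "is_substitution m \<sigma> \<longleftrightarrow> m \<ge> 1 \<and> (\<forall>j\<in>{1..m}. \<sigma> j \<noteq> [] \<and> set (\<sigma> j) \<subseteq> {1..m})"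

definition struct_matrix :: "(nat \<Rightarrow> nat list) \<Rightarrow> nat \<Rightarrow> nat \<Rightarrow> nat" where
  "struct_matrix \<sigma> i j = count_list (\<sigma> i) j"

definition Qadj :: "real \<Rightarrow> real set" where
  "Qadj \<beta> = {poly p \<beta> / poly q \<beta> | p q. (\<forall>i. coeff p i \<in> \<rat>) \<and> (\<forall>i. coeff q i \<in> \<rat>) \<and> poly q \<beta> \<noteq> 0}"

definition rQadj :: "real \<Rightarrow> real \<Rightarrow> real set" where
  "rQadj r \<beta> = {r * q | q. q \<in> Qadj \<beta>}"

text \<open>A tile is a pair (label, left endpoint); tile (j, s) is the interval [s, s + h j) labelled j.\<close>
type_synonym tile = "nat \<times> real"

definition tile_set :: "(nat \<Rightarrow> real) \<Rightarrow> tile \<Rightarrow> real set" where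
  "tile_set h T = {snd T ..< snd T + h (fst T)}"

definition patch :: "(nat \<Rightarrow> real) \<Rightarrow> real \<Rightarrow> nat list \<Rightarrow> tile list" where
  "patch h s w = map (\<lambda>i. (w ! i, s + sum_list (map h (take i w)))) [0..<length w]"

definition tiling_subst :: "(nat \<Rightarrow> nat list) \<Rightarrow> (nat \<Rightarrow> real) \<Rightarrow> real \<Rightarrow> tile \<Rightarrow> tile list" where
  "tiling_subst \<sigma> h \<beta> T = patch h (\<beta> * snd T) (\<sigma> (fst T))"

definition central :: "(nat \<Rightarrow> real) \<Rightarrow> tile \<Rightarrow> bool" where
  "central h T \<longleftrightarrow> snd T \<le> 0 \<and> 0 < snd T + h (fst T)"

definition barS :: "(nat \<Rightarrow> nat list) \<Rightarrow> (nat \<Rightarrow> real) \<Rightarrow> real \<Rightarrow> tile \<Rightarrow> tile" where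
  "barS \<sigma> h \<beta> T = (THE T'. T' \<in> set (tiling_subst \<sigma> h \<beta> T) \<and> (0::real) \<in> tile_set h T')"

definition gpt :: "(nat \<Rightarrow> real) \<Rightarrow> nat \<Rightarrow> real" where
  "gpt h j = (\<Sum>i=1..j. h i)"

definition Eint :: "(nat \<Rightarrow> real) \<Rightarrow> nat \<Rightarrow> real set" where
  "Eint h j = {gpt h (j - 1) ..< gpt h j}"

text \<open>The map F : E -> E. For x in E_j, E_j - x is the tile (j, g_{j-1} - x);
F x = y where bar S(E_j - x) = E_k - y = (k, g_{k-1} - y).\<close>
definition Fmap :: "nat \<Rightarrow> (nat \<Rightarrow> nat list) \<Rightarrow> (nat \<Rightarrow> real) \<Rightarrow> real \<Rightarrow> real \<Rightarrow> real" where
  "Fmap m \<sigma> h \<beta> x =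
     (let j = (THE j. j \<in> {1..m} \<and> x \<in> Eint h j);
          T' = barS \<sigma> h \<beta> (j, gpt h (j - 1) - x)
      in THE y. \<exists>k\<in>{1..m}. T' = (k, gpt h (k - 1) - y))"

definition gen_beta_transf_pts ::
  "real \<Rightarrow> real \<Rightarrow> (real \<Rightarrow> real) \<Rightarrow> nat \<Rightarrow> (nat \<Rightarrow> real) \<Rightarrow> (nat \<Rightarrow> real) \<Rightarrow> bool" where
  "gen_beta_transf_pts \<beta> B F l xs ys \<longleftrightarrow>
     l \<ge> 1 \<and> xs 0 = 0 \<and> xs l = B \<and> (\<forall>i<l. xs i < xs (Suc i)) \<and>
     (\<forall>j\<in>{1..l}. (\<lambda>t. \<beta> * t - ys j) ` {xs (j - 1) ..< xs j} \<subseteq> {0..<B} \<and>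
                  (\<forall>t\<in>{xs (j - 1) ..< xs j}. F t = \<beta> * t - ys j))"

definition gen_beta_transf :: "real \<Rightarrow> real \<Rightarrow> (real \<Rightarrow> real) \<Rightarrow> bool" where
  "gen_beta_transf \<beta> B F \<longleftrightarrow> (\<exists>l xs ys. gen_beta_transf_pts \<beta> B F l xs ys)"

definition algebraic_gen_beta_transf :: "real \<Rightarrow> real \<Rightarrow> (real \<Rightarrow> real) \<Rightarrow> bool" where
  "algebraic_gen_beta_transf \<beta> B F \<longleftrightarrow> algebraic \<beta> \<and>
     (\<exists>l xs ys r. gen_beta_transf_pts \<beta> B F l xs ys \<and>
        (\<forall>i\<in>{0..l}. xs i \<in> rQadj r \<beta>) \<and> (\<forall>j\<in>{1..l}. ys j \<in> rQadj r \<beta>))"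

end

theory Submission
  imports Defs "Jordan_Normal_Form.Char_Poly"
begin


lemma alg_part:
  fixes m :: nat and \<sigma> :: "nat \<Rightarrow> nat list" and \<beta> :: real and h :: "nat \<Rightarrow> real"
  assumes m: "m \<ge> 1"
    and h_pos: "\<forall>i\<in>{1..m}. h i > 0"
    and eigen: "\<forall>i\<in>{1..m}. (\<Sum>j=1..m. real (struct_matrix \<sigma> i j) * h j) = \<beta> * h i"
  shows "algebraic \<beta>"
proof -
  define A :: "int mat" where "A = mat m m (\<lambda>(i,j). int (struct_matrix \<sigma> (Suc i) (Suc j)))"
  have A: "A \<in> carrier_mat m m" unfolding A_def by simp
  define Ar where "Ar = map_mat real_of_int A"
  have Ar: "Ar \<in> carrier_mat m m" using A unfolding Ar_def by simp
  define v where "v = vec m (\<lambda>i. h (Suc i))"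
  have v: "v \<in> carrier_vec m" unfolding v_def by simp
  have v0: "v \<noteq> 0\<^sub>v m"
  proof
    assume "v = 0\<^sub>v m"
    then have "v $ 0 = 0" using m by simp
    moreover have "v $ 0 = h 1" using m unfolding v_def by simp
    moreover have "h 1 > 0" using h_pos m by auto
    ultimately show False by simp
  qed
  have Av: "Ar *\<^sub>v v = \<beta> \<cdot>\<^sub>v v"
  proof (rule eq_vecI)
    fix i assume i: "i < dim_vec (\<beta> \<cdot>\<^sub>v v)"
    then have im: "i < m" unfolding v_def by simp
    have "(Ar *\<^sub>v v) $ i = (\<Sum>j<m. real (struct_matrix \<sigma> (Suc i) (Suc j)) * h (Suc j))"
      using im unfolding Ar_def A_def v_def
      by (simp add: mult_mat_vec_def scalar_prod_def row_def atLeast0LessThan)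
    also have "\<dots> = (\<Sum>j=1..m. real (struct_matrix \<sigma> (Suc i) j) * h j)"
      by (rule sum.reindex_bij_witness[of _ "\<lambda>j. j - 1" Suc]) auto
    also have "\<dots> = \<beta> * h (Suc i)" using eigen im by auto
    finally show "(Ar *\<^sub>v v) $ i = (\<beta> \<cdot>\<^sub>v v) $ i" using im unfolding v_def by simp
  qed (simp add: Ar_def A_def v_def)
  have "eigenvalue Ar \<beta>"
    unfolding eigenvalue_def eigenvector_def using Ar v v0 Av by auto
  then have root: "poly (char_poly Ar) \<beta> = 0" using eigenvalue_root_char_poly[OF Ar] by simp
  have cp: "char_poly Ar = map_poly real_of_int (char_poly A)"
    unfolding Ar_def by (rule of_int_hom.char_poly_hom[OF A])
  have "coeff (char_poly A) m = 1" using degree_monic_char_poly[OF A] by simp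
  then have nz: "char_poly A \<noteq> 0" by auto
  show ?thesis
  proof (rule algebraicI[of "map_poly real_of_int (char_poly A)"])
    show "\<And>i. coeff (map_poly real_of_int (char_poly A)) i \<in> \<int>" by (simp add: coeff_map_poly)
    show "map_poly real_of_int (char_poly A) \<noteq> 0" using nz by simp
    show "poly (map_poly real_of_int (char_poly A)) \<beta> = 0" using root cp by simp
  qed
qed


definition rc :: "real poly \<Rightarrow> bool" where "rc p \<longleftrightarrow> (\<forall>i. coeff p i \<in> \<rat>)"

lemma rc_add: "rc p \<Longrightarrow> rc q \<Longrightarrow> rc (p + q)" unfolding rc_def by simp
lemma rc_uminus: "rc p \<Longrightarrow> rc (- p)" unfolding rc_def by simp
lemma rc_mult: "rc p \<Longrightarrow> rc q \<Longrightarrow> rc (p * q)" unfolding rc_def coeff_mult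
  by (auto intro!: Rats_sum Rats_mult)
lemma rc_const: "c \<in> \<rat> \<Longrightarrow> rc [:c:]" unfolding rc_def by (auto simp: coeff_pCons split: nat.splits)
lemma rc_x: "rc [:0,1:]" unfolding rc_def by (auto simp: coeff_pCons split: nat.splits)

lemma Qadj_iff: "x \<in> Qadj b \<longleftrightarrow> (\<exists>p q. rc p \<and> rc q \<and> poly q b \<noteq> 0 \<and> x = poly p b / poly q b)"
  unfolding Qadj_def rc_def by blast

lemma Qadj_rat: "c \<in> \<rat> \<Longrightarrow> c \<in> Qadj b"
  unfolding Qadj_iff by (rule exI[of _ "[:c:]"], rule exI[of _ "[:1:]"]) (auto intro: rc_const)

lemma Qadj_add: assumes "x \<in> Qadj b" "y \<in> Qadj b" shows "x + y \<in> Qadj b"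
proof -
  obtain p1 q1 p2 q2 where *: "rc p1" "rc q1" "poly q1 b \<noteq> 0" "x = poly p1 b / poly q1 b"
     "rc p2" "rc q2" "poly q2 b \<noteq> 0" "y = poly p2 b / poly q2 b" using assms unfolding Qadj_iff by blast
  show ?thesis unfolding Qadj_iff
    by (rule exI[of _ "p1 * q2 + p2 * q1"], rule exI[of _ "q1 * q2"])
       (use * in \<open>auto intro!: rc_add rc_mult simp: add_frac_eq\<close>)
qed

lemma Qadj_mult: assumes "x \<in> Qadj b" "y \<in> Qadj b" shows "x * y \<in> Qadj b"
proof -
  obtain p1 q1 p2 q2 where *: "rc p1" "rc q1" "poly q1 b \<noteq> 0" "x = poly p1 b / poly q1 b"
     "rc p2" "rc q2" "poly q2 b \<noteq> 0" "y = poly p2 b / poly q2 b" using assms unfolding Qadj_iff by blast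
  show ?thesis unfolding Qadj_iff
    by (rule exI[of _ "p1 * p2"], rule exI[of _ "q1 * q2"])
       (use * in \<open>auto intro!: rc_add rc_mult\<close>)
qed

lemma Qadj_uminus: assumes "x \<in> Qadj b" shows "- x \<in> Qadj b"
proof -
  have "(-1) * x \<in> Qadj b" by (rule Qadj_mult[OF Qadj_rat assms]) simp
  then show ?thesis by simp
qed

lemma Qadj_beta: "b \<in> Qadj b"
  unfolding Qadj_iff by (rule exI[of _ "[:0,1:]"], rule exI[of _ "[:1:]"]) (auto intro: rc_x rc_const)

lemma Qadj_inv_beta: "b \<noteq> 0 \<Longrightarrow> 1 / b \<in> Qadj b"
  unfolding Qadj_iff by (rule exI[of _ "[:1:]"], rule exI[of _ "[:0,1:]"]) (auto intro: rc_x rc_const)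


lemma rQ_iff: "x \<in> rQadj r b \<longleftrightarrow> (\<exists>q\<in>Qadj b. x = r * q)" unfolding rQadj_def by blast

lemma rQ_0: "0 \<in> rQadj r b" unfolding rQ_iff by (rule bexI[of _ 0]) (auto intro: Qadj_rat)

lemma rQ_add: "x \<in> rQadj r b \<Longrightarrow> y \<in> rQadj r b \<Longrightarrow> x + y \<in> rQadj r b"
  unfolding rQ_iff by (metis Qadj_add distrib_left)

lemma rQ_uminus: "x \<in> rQadj r b \<Longrightarrow> - x \<in> rQadj r b"
  unfolding rQ_iff by (metis Qadj_uminus mult_minus_right)

lemma rQ_diff: "x \<in> rQadj r b \<Longrightarrow> y \<in> rQadj r b \<Longrightarrow> x - y \<in> rQadj r b"
  using rQ_add[of x r b "-y"] rQ_uminus by simp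

lemma rQ_mult_beta: "x \<in> rQadj r b \<Longrightarrow> b * x \<in> rQadj r b"
  unfolding rQ_iff by (metis Qadj_mult Qadj_beta mult.left_commute)

lemma rQ_div_beta: "b \<noteq> 0 \<Longrightarrow> x \<in> rQadj r b \<Longrightarrow> x / b \<in> rQadj r b"
  unfolding rQ_iff using Qadj_mult[OF _ Qadj_inv_beta] by (metis times_divide_eq_right mult.right_neutral)

lemma rQ_sum: "finite A \<Longrightarrow> (\<And>i. i \<in> A \<Longrightarrow> f i \<in> rQadj r b) \<Longrightarrow> sum f A \<in> rQadj r b"
  by (induction A rule: finite_induct) (auto intro: rQ_0 rQ_add)

lemma rQ_sum_list: "(\<And>i. i \<in> set w \<Longrightarrow> f i \<in> rQadj r b) \<Longrightarrow> sum_list (map f w) \<in> rQadj r b"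
  by (induction w) (auto intro: rQ_0 rQ_add)



definition good :: "real \<Rightarrow> real \<Rightarrow> (real \<Rightarrow> real) \<Rightarrow> real \<Rightarrow> real \<Rightarrow> real \<Rightarrow> bool" where
  "good \<beta> B F u v y \<longleftrightarrow> (\<forall>t\<in>{u..<v}. F t = \<beta> * t - y \<and> \<beta> * t - y \<in> {0..<B})"

fun pw :: "real \<Rightarrow> real \<Rightarrow> (real \<Rightarrow> real) \<Rightarrow> real \<Rightarrow> real \<Rightarrow> (real \<times> real \<times> real) list \<Rightarrow> bool" where
  "pw \<beta> B F a b [] \<longleftrightarrow> a = b"
| "pw \<beta> B F a b ((u,v,y) # L) \<longleftrightarrow> u = a \<and> u < v \<and> good \<beta> B F u v y \<and> pw \<beta> B F v b L"

lemma pw_append: "pw \<beta> B F a b L1 \<Longrightarrow> pw \<beta> B F b c L2 \<Longrightarrow> pw \<beta> B F a c (L1 @ L2)"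
  by (induction L1 arbitrary: a) auto

lemma pw_concat:
  assumes "\<And>j. a \<le> j \<Longrightarrow> j < b \<Longrightarrow> pw \<beta> B F (q j) (q (Suc j)) (L j)" "a \<le> b"
  shows "pw \<beta> B F (q a) (q b) (concat (map L [a..<b]))"
  using assms
proof (induction b)
  case 0 then show ?case by simp
next
  case (Suc b)
  show ?case
  proof (cases "a = Suc b")
    case True then show ?thesis by simp
  next
    case False
    then have "a \<le> b" using Suc.prems by simp
    then have "pw \<beta> B F (q a) (q b) (concat (map L [a..<b]))" using Suc by simp
    moreover have "pw \<beta> B F (q b) (q (Suc b)) (L b)" using Suc.prems \<open>a \<le> b\<close> by simp
    ultimately show ?thesis using \<open>a \<le> b\<close> by (auto intro: pw_append)
  qed
qed

lemma pw_first: "pw \<beta> B F a b L \<Longrightarrow> L \<noteq> [] \<Longrightarrow> fst (L ! 0) = a"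
  by (cases L) auto

lemma pw_nth: "pw \<beta> B F a b L \<Longrightarrow> i < length L \<Longrightarrow>
   fst (L ! i) < fst (snd (L ! i)) \<and> good \<beta> B F (fst (L ! i)) (fst (snd (L ! i))) (snd (snd (L ! i))) \<and>
   fst (snd (L ! i)) = (if Suc i < length L then fst (L ! Suc i) else b)"
proof (induction L arbitrary: a i)
  case Nil then show ?case by simp
next
  case (Cons x L)
  obtain u v y where x: "x = (u,v,y)" by (cases x) auto
  show ?case
  proof (cases i)
    case 0 then show ?thesis using Cons.prems x by (cases L) auto
  next
    case (Suc i') then show ?thesis using Cons.prems Cons.IH[of v i'] x by auto
  qed
qed

lemma pw_gbt:
  assumes "pw \<beta> B F 0 B L" "L \<noteq> []"
  shows "gen_beta_transf_pts \<beta> B F (length L) (\<lambda>i. if i < length L then fst (L ! i) else B)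
           (\<lambda>j. snd (snd (L ! (j - 1))))"
proof -
  let ?l = "length L"
  let ?xs = "\<lambda>i. if i < length L then fst (L ! i) else B"
  have step: "?xs (Suc i) = fst (snd (L ! i))" if "i < ?l" for i
    using pw_nth[OF assms(1) that] by auto
  show ?thesis unfolding gen_beta_transf_pts_def
  proof (intro conjI allI impI ballI)
    show "1 \<le> ?l" using assms(2) by (cases L) auto
    show "?xs 0 = 0" using pw_first[OF assms] assms(2) by (cases L) auto
    show "?xs ?l = B" by simp
    fix i assume "i < ?l" then show "?xs i < ?xs (Suc i)" using pw_nth[OF assms(1)] step by auto
  next
    fix j assume j: "j \<in> {1..?l}"
    then have j1: "j - 1 < ?l" and jj: "j = Suc (j - 1)" by auto
    have xj: "?xs j = fst (snd (L ! (j - 1)))" using step[OF j1] jj by metis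
    have xj1: "?xs (j - 1) = fst (L ! (j - 1))" using j1 by simp
    have g: "good \<beta> B F (fst (L ! (j - 1))) (fst (snd (L ! (j - 1)))) (snd (snd (L ! (j - 1))))"
      using pw_nth[OF assms(1) j1] by auto
    show "(\<lambda>t. \<beta> * t - snd (snd (L ! (j - 1)))) ` {?xs (j - 1)..<?xs j} \<subseteq> {0..<B}"
      using g unfolding xj xj1 good_def by auto
    fix t assume "t \<in> {?xs (j - 1)..<?xs j}"
    then show "F t = \<beta> * t - snd (snd (L ! (j - 1)))" using g unfolding xj xj1 good_def by auto
  qed
qed



lemma mono_upto: "(\<And>k. k < n \<Longrightarrow> f k \<le> f (Suc k)) \<Longrightarrow> i \<le> i' \<Longrightarrow> i' \<le> n \<Longrightarrow> (f i :: real) \<le> f i'"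
proof (induction i')
  case 0 then show ?case by simp
next
  case (Suc i') then show ?case by (cases "i = Suc i'") (auto intro: order_trans)
qed

lemma gpt_Suc: "gpt h (Suc j) = gpt h j + h (Suc j)" unfolding gpt_def by simp

lemma sum_list_count: "set w \<subseteq> {1..(m::nat)} \<Longrightarrow> sum_list (map h w) = (\<Sum>k=1..m. real (count_list w k) * h k)"
proof (induction w)
  case Nil then show ?case by simp
next
  case (Cons a w)
  have "(\<Sum>k=1..m. real (count_list (a # w) k) * h k) =
        (\<Sum>k=1..m. (if a = k then h k else 0) + real (count_list w k) * h k)"
    by (rule sum.cong) (auto simp: algebra_simps)
  also have "\<dots> = (\<Sum>k=1..m. (if a = k then h k else 0)) + (\<Sum>k=1..m. real (count_list w k) * h k)"
    by (rule sum.distrib)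
  also have "(\<Sum>k=1..m. (if a = k then h k else 0)) = (\<Sum>k=1..m. (if k = a then h a else 0))"
    by (rule sum.cong) auto
  also have "\<dots> = h a"
  proof -
    have "a \<in> {1..m}" using Cons.prems by simp
    then show ?thesis by (simp only: sum.delta finite_atLeastAtMost if_True)
  qed
  finally show ?case using Cons by simp
qed

context
  fixes m :: nat and \<sigma> :: "nat \<Rightarrow> nat list" and \<beta> :: real and h :: "nat \<Rightarrow> real"
  assumes subst: "is_substitution m \<sigma>"
    and beta_gt: "\<beta> > 1"
    and h_pos: "\<forall>i\<in>{1..m}. h i > 0"
    and eigen: "\<forall>i\<in>{1..m}. (\<Sum>j=1..m. real (struct_matrix \<sigma> i j) * h j) = \<beta> * h i"
begin

lemma g_mono: assumes "j \<le> k" "k \<le> m" shows "gpt h j \<le> gpt h k"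
proof (rule mono_upto[of m])
  fix ka assume "ka < m"
  then have "h (Suc ka) > 0" using h_pos by auto
  then show "gpt h ka \<le> gpt h (Suc ka)" unfolding gpt_Suc by simp
qed (use assms in auto)

lemma g_strict: "j < k \<Longrightarrow> k \<le> m \<Longrightarrow> gpt h j < gpt h k"
proof -
  assume a: "j < k" "k \<le> m"
  have "gpt h j \<le> gpt h (k - 1)" using a by (intro g_mono) auto
  also have "\<dots> < gpt h k" using a h_pos gpt_Suc[of h "k - 1"] by auto
  finally show ?thesis .
qed

lemma g0: "gpt h 0 = 0" unfolding gpt_def by simp

lemma Eint_unique: "j \<in> {1..m} \<Longrightarrow> j' \<in> {1..m} \<Longrightarrow> t \<in> Eint h j \<Longrightarrow> t \<in> Eint h j' \<Longrightarrow> j = j'"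
proof (rule ccontr)
  assume a: "j \<in> {1..m}" "j' \<in> {1..m}" "t \<in> Eint h j" "t \<in> Eint h j'" "j \<noteq> j'"
  show False
  proof (cases "j < j'")
    case True
    then have "gpt h j \<le> gpt h (j' - 1)" using a by (intro g_mono) auto
    then show False using a unfolding Eint_def by auto
  next
    case False
    then have "gpt h j' \<le> gpt h (j - 1)" using a by (intro g_mono) auto
    then show False using a unfolding Eint_def by auto
  qed
qed

definition cc :: "nat \<Rightarrow> nat \<Rightarrow> real" where "cc j i = sum_list (map h (take i (\<sigma> j)))"

lemma w_in: "j \<in> {1..m} \<Longrightarrow> i < length (\<sigma> j) \<Longrightarrow> \<sigma> j ! i \<in> {1..m}"
  using subst unfolding is_substitution_def by (meson nth_mem subsetD)

lemma cc_Suc: "j \<in> {1..m} \<Longrightarrow> i < length (\<sigma> j) \<Longrightarrow> cc j (Suc i) = cc j i + h (\<sigma> j ! i)"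
  unfolding cc_def by (simp add: take_Suc_conv_app_nth)

lemma cc_mono: assumes j: "j \<in> {1..m}" and "i \<le> i'" "i' \<le> length (\<sigma> j)" shows "cc j i \<le> cc j i'"
proof (rule mono_upto[of "length (\<sigma> j)"])
  fix k assume "k < length (\<sigma> j)"
  then have "\<sigma> j ! k \<in> {1..m}" using w_in[OF j] by blast
  then have "h (\<sigma> j ! k) > 0" using h_pos by blast
  then show "cc j k \<le> cc j (Suc k)" using cc_Suc[OF j \<open>k < length (\<sigma> j)\<close>] by simp
qed (use assms in auto)

lemma cc0: "cc j 0 = 0" unfolding cc_def by simp

lemma cc_len: "j \<in> {1..m} \<Longrightarrow> cc j (length (\<sigma> j)) = \<beta> * h j"
proof -
  assume j: "j \<in> {1..m}"
  have "set (\<sigma> j) \<subseteq> {1..m}" using subst j unfolding is_substitution_def by auto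
  then have "cc j (length (\<sigma> j)) = (\<Sum>k=1..m. real (count_list (\<sigma> j) k) * h k)"
    unfolding cc_def by (simp add: sum_list_count)
  also have "\<dots> = \<beta> * h j" using eigen j unfolding struct_matrix_def by auto
  finally show ?thesis .
qed

lemma Fmap_eq:
  assumes j: "j \<in> {1..m}" and i: "i < length (\<sigma> j)"
    and t1: "gpt h (j - 1) + cc j i / \<beta> \<le> t" and t2: "t < gpt h (j - 1) + cc j (Suc i) / \<beta>"
  shows "Fmap m \<sigma> h \<beta> t = \<beta> * t - (\<beta> * gpt h (j - 1) + cc j i - gpt h (\<sigma> j ! i - 1))
     \<and> \<beta> * t - (\<beta> * gpt h (j - 1) + cc j i - gpt h (\<sigma> j ! i - 1)) \<in> {0..<gpt h m}"
proof -
  define w where "w = \<sigma> j"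
  define n where "n = length w"
  define k where "k = w ! i"
  define s where "s = \<beta> * (gpt h (j - 1) - t)"
  have bp: "\<beta> > 0" using beta_gt by simp
  have k: "k \<in> {1..m}" using w_in[OF j i] unfolding k_def w_def .
  have c_i0: "cc j i \<ge> 0" using cc_mono[OF j, of 0 i] i cc0 by simp
  have c_in: "cc j (Suc i) \<le> \<beta> * h j" using cc_mono[OF j, of "Suc i" "length (\<sigma> j)"] i cc_len[OF j] by simp
  have s1: "s + cc j i \<le> 0"
  proof -
    have "\<beta> * (gpt h (j - 1) + cc j i / \<beta>) \<le> \<beta> * t" using t1 bp by (intro mult_left_mono) auto
    then show ?thesis unfolding s_def using bp by (simp add: algebra_simps)
  qed
  have s2: "0 < s + cc j (Suc i)"
  proof -
    have "\<beta> * t < \<beta> * (gpt h (j - 1) + cc j (Suc i) / \<beta>)" using t2 bp by (intro mult_strict_left_mono) auto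
    then show ?thesis unfolding s_def using bp by (simp add: algebra_simps)
  qed
  have tE: "t \<in> Eint h j"
  proof -
    have "cc j i / \<beta> \<ge> 0" using c_i0 bp by simp
    moreover have "cc j (Suc i) / \<beta> \<le> h j" using c_in bp by (simp add: divide_le_eq mult.commute)
    moreover have "gpt h j = gpt h (j - 1) + h j" using gpt_Suc[of h "j - 1"] j by simp
    ultimately show ?thesis unfolding Eint_def using t1 t2 by auto
  qed
  have J: "(THE j'. j' \<in> {1..m} \<and> t \<in> Eint h j') = j"
    using j tE Eint_unique by blast
  have ts: "tiling_subst \<sigma> h \<beta> (j, gpt h (j - 1) - t) = map (\<lambda>i. (w ! i, s + cc j i)) [0..<n]"
    unfolding tiling_subst_def patch_def s_def w_def n_def cc_def by simp
  have cS: "cc j (Suc i') = cc j i' + h (w ! i')" if "i' < n" for i'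
    using cc_Suc[OF j] that unfolding w_def n_def by simp
  have BS: "barS \<sigma> h \<beta> (j, gpt h (j - 1) - t) = (k, s + cc j i)"
    unfolding barS_def ts
  proof (rule the_equality)
    show "(k, s + cc j i) \<in> set (map (\<lambda>i. (w ! i, s + cc j i)) [0..<n]) \<and> 0 \<in> tile_set h (k, s + cc j i)"
      using i s1 s2 cS[of i] unfolding k_def n_def w_def tile_set_def by auto
  next
    fix T' assume T': "T' \<in> set (map (\<lambda>i. (w ! i, s + cc j i)) [0..<n]) \<and> 0 \<in> tile_set h T'"
    then obtain i' where i': "i' < n" "T' = (w ! i', s + cc j i')" by auto
    have a1: "s + cc j i' \<le> 0" "0 < s + cc j (Suc i')" using T' i' cS[of i'] unfolding tile_set_def by auto
    have "i' = i"
    proof (rule ccontr)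
      assume "i' \<noteq> i"
      then consider "i' < i" | "i < i'" by linarith
      then show False
      proof cases
        case 1 then have "cc j (Suc i') \<le> cc j i" using cc_mono[OF j] i by simp
        then show False using a1 s1 by simp
      next
        case 2 then have "cc j (Suc i) \<le> cc j i'" using cc_mono[OF j] i' unfolding n_def w_def by simp
        then show False using a1 s2 by simp
      qed
    qed
    then show "T' = (k, s + cc j i)" using i' unfolding k_def by simp
  qed
  have Y: "(THE y. \<exists>k'\<in>{1..m}. (k, s + cc j i) = (k', gpt h (k' - 1) - y)) = gpt h (k - 1) - s - cc j i"
    by (rule the_equality) (use k in auto)
  have F: "Fmap m \<sigma> h \<beta> t = gpt h (k - 1) - s - cc j i"
    unfolding Fmap_def Let_def J BS Y ..
  have val: "gpt h (k - 1) - s - cc j i = \<beta> * t - (\<beta> * gpt h (j - 1) + cc j i - gpt h (\<sigma> j ! i - 1))"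
    unfolding s_def k_def w_def by (simp add: algebra_simps)
  have gk: "gpt h k = gpt h (k - 1) + h k" using gpt_Suc[of h "k - 1"] k by simp
  have "gpt h 0 \<le> gpt h (k - 1)" by (rule g_mono) (use k in auto)
  then have "gpt h (k - 1) \<ge> 0" using g0 by simp
  moreover have "gpt h k \<le> gpt h m" using g_mono[of k m] k by simp
  moreover have "h k = h (w ! i)" unfolding k_def ..
  ultimately have "gpt h (k - 1) - s - cc j i \<in> {0..<gpt h m}"
    using s1 s2 cS[of i] i gk unfolding n_def w_def by auto
  then show ?thesis using F val by simp
qed


definition pp :: "nat \<Rightarrow> nat \<Rightarrow> real" where "pp j i = gpt h (j - 1) + cc j i / \<beta>"
definition yv :: "nat \<Rightarrow> nat \<Rightarrow> real" where
  "yv j i = \<beta> * gpt h (j - 1) + cc j i - gpt h (\<sigma> j ! i - 1)"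
definition blk :: "nat \<Rightarrow> (real \<times> real \<times> real) list" where
  "blk j = map (\<lambda>i. (pp j i, pp j (Suc i), yv j i)) [0..<length (\<sigma> j)]"
definition LL :: "(real \<times> real \<times> real) list" where
  "LL = concat (map blk [1..<Suc m])"

lemma concat_single: "concat (map (\<lambda>x. [f x]) xs) = map f xs"
  by (induction xs) auto

lemma blk_pw: assumes j: "j \<in> {1..m}"
  shows "pw \<beta> (gpt h m) (Fmap m \<sigma> h \<beta>) (gpt h (j - 1)) (gpt h j) (blk j)"
proof -
  let ?n = "length (\<sigma> j)"
  have bp: "\<beta> > 0" using beta_gt by simp
  have "pw \<beta> (gpt h m) (Fmap m \<sigma> h \<beta>) (pp j 0) (pp j ?n)
          (concat (map (\<lambda>i. [(pp j i, pp j (Suc i), yv j i)]) [0..<?n]))"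
  proof (rule pw_concat)
    fix i assume i: "0 \<le> i" "i < ?n"
    have "\<sigma> j ! i \<in> {1..m}" using w_in[OF j i(2)] .
    then have "h (\<sigma> j ! i) > 0" using h_pos by blast
    then have lt: "pp j i < pp j (Suc i)" unfolding pp_def cc_Suc[OF j i(2)] using bp
      by (simp add: add_divide_distrib)
    have "good \<beta> (gpt h m) (Fmap m \<sigma> h \<beta>) (pp j i) (pp j (Suc i)) (yv j i)"
      unfolding good_def pp_def yv_def using Fmap_eq[OF j i(2)] by auto
    then show "pw \<beta> (gpt h m) (Fmap m \<sigma> h \<beta>) (pp j i) (pp j (Suc i)) [(pp j i, pp j (Suc i), yv j i)]"
      using lt by simp
  qed simp
  moreover have "pp j 0 = gpt h (j - 1)" unfolding pp_def cc0 by simp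
  moreover have "pp j ?n = gpt h j"
    unfolding pp_def cc_len[OF j] using bp gpt_Suc[of h "j - 1"] j by simp
  ultimately show ?thesis unfolding blk_def concat_single by simp
qed

lemma LL_pw: "pw \<beta> (gpt h m) (Fmap m \<sigma> h \<beta>) 0 (gpt h m) LL"
proof -
  have "pw \<beta> (gpt h m) (Fmap m \<sigma> h \<beta>) ((\<lambda>j. gpt h (j - 1)) 1) ((\<lambda>j. gpt h (j - 1)) (Suc m))
          (concat (map blk [1..<Suc m]))"
  proof (rule pw_concat)
    fix j assume "1 \<le> j" "j < Suc m"
    then show "pw \<beta> (gpt h m) (Fmap m \<sigma> h \<beta>) (gpt h (j - 1)) (gpt h (Suc j - 1)) (blk j)"
      using blk_pw[of j] by simp
  qed simp
  then show ?thesis unfolding LL_def using g0 by simp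
qed

lemma LL_ne: "LL \<noteq> []"
proof
  assume "LL = []"
  then have "gpt h m = 0" using LL_pw by simp
  moreover have "m \<ge> 1" using subst unfolding is_substitution_def by simp
  then have "gpt h 0 < gpt h m" by (intro g_strict) auto
  ultimately show False using g0 by simp
qed

lemma LL_R:
  assumes r: "\<forall>i\<in>{1..m}. h i \<in> rQadj r \<beta>"
  shows "gpt h m \<in> rQadj r \<beta>" "x \<in> set LL \<Longrightarrow> fst x \<in> rQadj r \<beta> \<and> snd (snd x) \<in> rQadj r \<beta>"
proof -
  have bn: "\<beta> \<noteq> 0" using beta_gt by simp
  have gR: "gpt h k \<in> rQadj r \<beta>" if "k \<le> m" for k
    unfolding gpt_def by (rule rQ_sum) (use r that in auto)
  then show "gpt h m \<in> rQadj r \<beta>" by simp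
  have ccR: "cc j i \<in> rQadj r \<beta>" if j: "j \<in> {1..m}" for j i
  proof -
    have "set (take i (\<sigma> j)) \<subseteq> {1..m}" using subst j set_take_subset[of i "\<sigma> j"]
      unfolding is_substitution_def by blast
    then show ?thesis unfolding cc_def by (intro rQ_sum_list) (use r in auto)
  qed
  assume "x \<in> set LL"
  then have "\<exists>j\<in>{1..<Suc m}. x \<in> set (blk j)" unfolding LL_def set_concat set_map set_upt by blast
  then obtain j where j0: "j \<in> {1..<Suc m}" and xb: "x \<in> set (blk j)" by blast
  then have j: "j \<in> {1..m}" by auto
  obtain i where i: "i < length (\<sigma> j)"
    and x: "x = (pp j i, pp j (Suc i), yv j i)"
    using xb unfolding blk_def by auto
  have k: "\<sigma> j ! i \<in> {1..m}" using w_in[OF j i] .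
  have "pp j i \<in> rQadj r \<beta>" unfolding pp_def
    by (intro rQ_add gR rQ_div_beta bn ccR j) (use j in auto)
  moreover have "yv j i \<in> rQadj r \<beta>" unfolding yv_def
    by (intro rQ_add rQ_diff rQ_mult_beta gR ccR j) (use j k in auto)
  ultimately show "fst x \<in> rQadj r \<beta> \<and> snd (snd x) \<in> rQadj r \<beta>" using x by simp
qed


lemma main_in:
  assumes h_alg: "\<exists>r>0. \<forall>i\<in>{1..m}. h i \<in> rQadj r \<beta>"
  shows "algebraic_gen_beta_transf \<beta> (gpt h m) (Fmap m \<sigma> h \<beta>)"
proof -
  obtain r where r: "\<forall>i\<in>{1..m}. h i \<in> rQadj r \<beta>" using h_alg by blast
  have m1: "m \<ge> 1" using subst unfolding is_substitution_def by simp
  have alg: "algebraic \<beta>" by (rule alg_part[OF m1 h_pos eigen])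
  have G: "gen_beta_transf_pts \<beta> (gpt h m) (Fmap m \<sigma> h \<beta>) (length LL)
      (\<lambda>i. if i < length LL then fst (LL ! i) else gpt h m) (\<lambda>j. snd (snd (LL ! (j - 1))))"
    by (rule pw_gbt[OF LL_pw LL_ne])
  have X: "\<forall>i\<in>{0..length LL}. (if i < length LL then fst (LL ! i) else gpt h m) \<in> rQadj r \<beta>"
    using LL_R[OF r] nth_mem by auto
  have Y: "\<forall>j\<in>{1..length LL}. snd (snd (LL ! (j - 1))) \<in> rQadj r \<beta>"
  proof
    fix j assume "j \<in> {1..length LL}"
    then have "LL ! (j - 1) \<in> set LL" by (intro nth_mem) auto
    then show "snd (snd (LL ! (j - 1))) \<in> rQadj r \<beta>" using LL_R[OF r] by blast
  qed
  show ?thesis unfolding algebraic_gen_beta_transf_def using alg G X Y by blast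
qed

end

theorem mainTheorem1:
  fixes m :: nat and \<sigma> :: "nat \<Rightarrow> nat list" and \<beta> :: real and h :: "nat \<Rightarrow> real"
  assumes subst: "is_substitution m \<sigma>"
    and beta_gt: "\<beta> > 1"
    and h_pos: "\<forall>i\<in>{1..m}. h i > 0"
    and eigen: "\<forall>i\<in>{1..m}. (\<Sum>j=1..m. real (struct_matrix \<sigma> i j) * h j) = \<beta> * h i"
    and h_alg: "\<exists>r>0. \<forall>i\<in>{1..m}. h i \<in> rQadj r \<beta>"
  shows "algebraic_gen_beta_transf \<beta> (gpt h m) (Fmap m \<sigma> h \<beta>)"
  by (rule main_in[OF subst beta_gt h_pos eigen h_alg])

end
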